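(* Let $G$ be a finite simple connected graph that is simply connected, and let $v_0\in V(G)$. Then the cluster graph $\mathcal{C}(G)$ of $G$ with respect to $v_0$ is a tree.
   Context: For $i\ge 0$ let $S^i=\{v\in V(G): d(v_0,v)=i\}$ (graph distance). The clusters of $G$ with respect to $v_0$ are the vertex sets of the connected components of the induced subgraphs $G[S^i]$, $i\ge 0$; i.e. two vertices $u,v\in S^i$ are in the same cluster iff there is a path from $u$ to $v$ all of whose vertices lie in $S^i$. The cluster graph $\mathcal{C}(G)$ has the clusters as vertices, and two distinct clusters $C,C'$ are adjacent iff there exist $v\in C$, $v'\in C'$ with $vv'\in E(G)$. A loop in $G$ is a finite sequence of vertices $(v_0,\dots,v_k)$ with, for each $i<k$, $v_iv_{i+1}\in E(G)$ or $v_i=v_{i+1}$. Two loops $(v_0,\dots,v_{i-1},v_i,v_{i+1},\dots,v_k)$ and $(v_0,\dots,v_{i-1},v_{i+1},\dots,v_k)$ are related by an elementary homotopy (in either direction) if $v_i=v_{i+1}$, or $v_{i-1}=v_{i+1}$, or $v_{i-1}v_{i+1}\in E(G)$. A loop is contractible if it can be reduced to a single vertex by a finite sequence of elementary homotopies; $G$ is simply connected if every loop is contractible. *)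

theory Defs
  imports Main
begin

definition simple_graph :: "'a set \<Rightarrow> ('a \<Rightarrow> 'a \<Rightarrow> bool) \<Rightarrow> bool" where
  "simple_graph V E \<longleftrightarrow> (\<forall>u v. E u v \<longrightarrow> u \<in> V \<and> v \<in> V) \<and>
     (\<forall>u v. E u v \<longrightarrow> E v u) \<and> (\<forall>v. \<not> E v v)"

definition finite_simple_graph :: "'a set \<Rightarrow> ('a \<Rightarrow> 'a \<Rightarrow> bool) \<Rightarrow> bool" where
  "finite_simple_graph V E \<longleftrightarrow> finite V \<and> simple_graph V E"

definition is_walk :: "'a set \<Rightarrow> ('a \<Rightarrow> 'a \<Rightarrow> bool) \<Rightarrow> 'a list \<Rightarrow> 'a \<Rightarrow> 'a \<Rightarrow> bool" where
  "is_walk V E xs u v \<longleftrightarrow> xs \<noteq> [] \<and> set xs \<subseteq> V \<and> successively E xs \<and> hd xs = u \<and> last xs = v"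

definition connected_graph :: "'a set \<Rightarrow> ('a \<Rightarrow> 'a \<Rightarrow> bool) \<Rightarrow> bool" where
  "connected_graph V E \<longleftrightarrow> V \<noteq> {} \<and> (\<forall>u\<in>V. \<forall>v\<in>V. \<exists>xs. is_walk V E xs u v)"

definition is_cycle :: "'a set \<Rightarrow> ('a \<Rightarrow> 'a \<Rightarrow> bool) \<Rightarrow> 'a list \<Rightarrow> bool" where
  "is_cycle V E xs \<longleftrightarrow> length xs \<ge> 3 \<and> distinct xs \<and> set xs \<subseteq> V \<and> successively E xs
     \<and> E (last xs) (hd xs)"

definition is_tree :: "'a set \<Rightarrow> ('a \<Rightarrow> 'a \<Rightarrow> bool) \<Rightarrow> bool" where
  "is_tree V E \<longleftrightarrow> connected_graph V E \<and> \<not> (\<exists>xs. is_cycle V E xs)"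

definition gdist :: "'a set \<Rightarrow> ('a \<Rightarrow> 'a \<Rightarrow> bool) \<Rightarrow> 'a \<Rightarrow> 'a \<Rightarrow> nat" where
  "gdist V E u v = (LEAST n. \<exists>xs. is_walk V E xs u v \<and> length xs = Suc n)"

definition sphere :: "'a set \<Rightarrow> ('a \<Rightarrow> 'a \<Rightarrow> bool) \<Rightarrow> 'a \<Rightarrow> nat \<Rightarrow> 'a set" where
  "sphere V E v0 i = {v \<in> V. gdist V E v0 v = i}"

text \<open>Clusters: vertex sets of connected components of the induced subgraphs G[S^i].\<close>
definition clusters :: "'a set \<Rightarrow> ('a \<Rightarrow> 'a \<Rightarrow> bool) \<Rightarrow> 'a \<Rightarrow> 'a set set" where
  "clusters V E v0 = {C. \<exists>i. \<exists>v \<in> sphere V E v0 i.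
      C = {u. \<exists>xs. is_walk (sphere V E v0 i) E xs v u}}"

definition cluster_adj :: "('a \<Rightarrow> 'a \<Rightarrow> bool) \<Rightarrow> 'a set \<Rightarrow> 'a set \<Rightarrow> bool" where
  "cluster_adj E C C' \<longleftrightarrow> C \<noteq> C' \<and> (\<exists>v\<in>C. \<exists>v'\<in>C'. E v v')"

definition is_loop :: "'a set \<Rightarrow> ('a \<Rightarrow> 'a \<Rightarrow> bool) \<Rightarrow> 'a list \<Rightarrow> bool" where
  "is_loop V E xs \<longleftrightarrow> xs \<noteq> [] \<and> set xs \<subseteq> V \<and> successively (\<lambda>a b. a = b \<or> E a b) xs
     \<and> hd xs = last xs"

definition elem_reduction :: "('a \<Rightarrow> 'a \<Rightarrow> bool) \<Rightarrow> 'a list \<Rightarrow> 'a list \<Rightarrow> bool" where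
  "elem_reduction E xs ys \<longleftrightarrow> (\<exists>i. Suc i < length xs \<and> ys = take i xs @ drop (Suc i) xs \<and>
     (xs ! i = xs ! Suc i \<or>
      (0 < i \<and> (xs ! (i - 1) = xs ! Suc i \<or> E (xs ! (i - 1)) (xs ! Suc i)))))"

definition elem_homotopy :: "'a set \<Rightarrow> ('a \<Rightarrow> 'a \<Rightarrow> bool) \<Rightarrow> 'a list \<Rightarrow> 'a list \<Rightarrow> bool" where
  "elem_homotopy V E xs ys \<longleftrightarrow> is_loop V E xs \<and> is_loop V E ys \<and>
     (elem_reduction E xs ys \<or> elem_reduction E ys xs)"

definition contractible :: "'a set \<Rightarrow> ('a \<Rightarrow> 'a \<Rightarrow> bool) \<Rightarrow> 'a list \<Rightarrow> bool" where
  "contractible V E xs \<longleftrightarrow> (\<exists>v. (elem_homotopy V E)\<^sup>*\<^sup>* xs [v])"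

definition simply_connected :: "'a set \<Rightarrow> ('a \<Rightarrow> 'a \<Rightarrow> bool) \<Rightarrow> bool" where
  "simply_connected V E \<longleftrightarrow> (\<forall>xs. is_loop V E xs \<longrightarrow> contractible V E xs)"

end

theory Submission
  imports Defs
begin

definition conn :: "'a set \<Rightarrow> ('a \<Rightarrow> 'a \<Rightarrow> bool) \<Rightarrow> 'a \<Rightarrow> 'a \<Rightarrow> bool" where
  "conn S E x y \<longleftrightarrow> (\<exists>xs. is_walk S E xs x y)"

lemma is_walk_single: "x \<in> S \<Longrightarrow> is_walk S E [x] x x"
  by (simp add: is_walk_def)

lemma is_walk_append:
  "is_walk S E xs a b \<Longrightarrow> is_walk S E ys c d \<Longrightarrow> E b c \<Longrightarrow> is_walk S E (xs @ ys) a d"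
  unfolding is_walk_def by (auto simp: successively_append_iff)

lemma is_walk_join:
  assumes "is_walk S E xs a b" "is_walk S E ys b d"
  shows "is_walk S E (xs @ tl ys) a d"
proof (cases "tl ys = []")
  case True
  then have "ys = [b]" using assms(2) unfolding is_walk_def by (cases ys) auto
  then show ?thesis using assms by (simp add: is_walk_def)
next
  case False
  then obtain c r where ys: "ys = b # c # r" using assms(2) unfolding is_walk_def
    by (cases ys; cases "tl ys") auto
  have "is_walk S E (c # r) c d" using assms(2) ys unfolding is_walk_def by auto
  moreover have "E b c" using assms(2) ys unfolding is_walk_def by auto
  ultimately show ?thesis using is_walk_append[OF assms(1)] ys by auto
qed

lemma is_walk_rev:
  assumes sy: "\<And>u v. E u v \<Longrightarrow> E v u" and w: "is_walk S E xs a b"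
  shows "is_walk S E (rev xs) b a"
proof -
  have "successively E xs" using w unfolding is_walk_def by simp
  then have "successively (\<lambda>x y. E y x) xs" by (rule successively_mono) (rule sy)
  then show ?thesis using w unfolding is_walk_def by (simp add: hd_rev last_rev)
qed

lemma is_walk_mono: "S \<subseteq> T \<Longrightarrow> is_walk S E xs a b \<Longrightarrow> is_walk T E xs a b"
  unfolding is_walk_def by auto

lemma is_walk_prefix:
  assumes "is_walk S E w a b" "u \<in> set w"
  shows "\<exists>p. is_walk S E (p @ [u]) a u"
proof -
  obtain p q where w: "w = p @ u # q" using split_list[OF assms(2)] by blast
  have s: "successively E (p @ [u] @ q)" using assms(1) w unfolding is_walk_def by simp
  have "successively E (p @ [u])"
    using s unfolding append_assoc[symmetric] successively_append_iff by blast
  moreover have "hd (p @ [u]) = a" using assms(1) w unfolding is_walk_def by (cases p) auto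
  moreover have "set (p @ [u]) \<subseteq> S" using assms(1) w unfolding is_walk_def by auto
  ultimately have "is_walk S E (p @ [u]) a u" unfolding is_walk_def by simp
  then show ?thesis by blast
qed

lemma conn_refl: "x \<in> S \<Longrightarrow> conn S E x x"
  unfolding conn_def by (rule exI[of _ "[x]"]) (rule is_walk_single)

lemma conn_trans:
  assumes "conn S E x y" "conn S E y z" shows "conn S E x z"
proof -
  obtain xs where 1: "is_walk S E xs x y" using assms(1) unfolding conn_def by blast
  obtain ys where 2: "is_walk S E ys y z" using assms(2) unfolding conn_def by blast
  from is_walk_join[OF 1 2] show ?thesis unfolding conn_def by blast
qed

lemma conn_sym:
  assumes sy: "\<And>u v. E u v \<Longrightarrow> E v u" and c: "conn S E x y"
  shows "conn S E y x"
proof -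
  obtain xs where "is_walk S E xs x y" using c unfolding conn_def by blast
  from is_walk_rev[OF sy this] show ?thesis unfolding conn_def by blast
qed

lemma conn_edge: "x \<in> S \<Longrightarrow> y \<in> S \<Longrightarrow> E x y \<Longrightarrow> conn S E x y"
  unfolding conn_def by (rule exI[of _ "[x,y]"]) (simp add: is_walk_def)

lemma conn_mid: "is_walk S E w a b \<Longrightarrow> u \<in> set w \<Longrightarrow> conn S E a u"
proof -
  assume "is_walk S E w a b" "u \<in> set w"
  from is_walk_prefix[OF this] show ?thesis unfolding conn_def by blast
qed

fun ct :: "('b \<Rightarrow> 'b \<Rightarrow> bool) \<Rightarrow> 'b list \<Rightarrow> nat" where
  "ct P (a # b # r) = (if P a b then 1 else 0) + ct P (b # r)"
| "ct P _ = 0"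

lemma ct_Cons_app: "ct P (pre @ a # r) = ct P (pre @ [a]) + ct P (a # r)"
proof (induction pre)
  case Nil then show ?case by simp
next
  case (Cons x pre)
  show ?case
  proof (cases pre)
    case Nil
    then show ?thesis by simp
  next
    case (Cons y pre')
    have "ct P ((x # pre) @ a # r) = (if P x y then 1 else 0) + ct P (pre @ a # r)"
      using Cons by simp
    also have "\<dots> = (if P x y then 1 else 0) + (ct P (pre @ [a]) + ct P (a # r))"
      using Cons.IH by simp
    also have "\<dots> = ct P ((x # pre) @ [a]) + ct P (a # r)"
      using Cons by simp
    finally show ?thesis .
  qed
qed

lemma ct_append:
  "xs \<noteq> [] \<Longrightarrow> ys \<noteq> [] \<Longrightarrow>
   ct P (xs @ ys) = ct P xs + (if P (last xs) (hd ys) then 1 else 0) + ct P ys"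
proof -
  assume "xs \<noteq> []" "ys \<noteq> []"
  obtain pre a where xs: "xs = pre @ [a]" using \<open>xs \<noteq> []\<close> by (cases xs rule: rev_cases) auto
  obtain b r where ys: "ys = b # r" using \<open>ys \<noteq> []\<close> by (cases ys) auto
  have "ct P (xs @ ys) = ct P (pre @ [a]) + ct P (a # b # r)"
    using ct_Cons_app[of P pre a "b # r"] xs ys by simp
  then show ?thesis using xs ys by simp
qed

lemma ct_zero: "(\<And>a b. a \<in> set l \<Longrightarrow> b \<in> set l \<Longrightarrow> \<not> P a b) \<Longrightarrow> ct P l = 0"
proof (induction P l rule: ct.induct)
  case (1 P a b r)
  have "ct P (b # r) = 0" using 1 by (metis list.set_intros(2))
  moreover have "\<not> P a b" using 1(2) by simp
  ultimately show ?case by simp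
qed auto

lemma ct_zero2: "(\<And>a b. a \<in> set l \<Longrightarrow> \<not> P a b) \<Longrightarrow> ct P (l @ [z]) = 0"
proof (induction l)
  case Nil then show ?case by simp
next
  case (Cons a l)
  have IH: "ct P (l @ [z]) = 0" using Cons.IH Cons.prems by simp
  obtain c r where cr: "l @ [z] = c # r" by (cases "l @ [z]") auto
  have na: "\<not> P a c" using Cons.prems by simp
  have "ct P ((a # l) @ [z]) = ct P (a # c # r)" using cr by simp
  also have "\<dots> = 0" using IH cr na by simp
  finally show ?case .
qed

locale cg =
  fixes V :: "'a set" and E :: "'a \<Rightarrow> 'a \<Rightarrow> bool" and v0 :: 'a
  assumes fsg: "finite_simple_graph V E" and cn: "connected_graph V E" and v0V: "v0 \<in> V"
begin

abbreviation d :: "'a \<Rightarrow> nat" where "d v \<equiv> gdist V E v0 v"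

lemma sy: "E u v \<Longrightarrow> E v u"
  using fsg unfolding finite_simple_graph_def simple_graph_def by blast

lemma inV: "E u v \<Longrightarrow> u \<in> V \<and> v \<in> V"
  using fsg unfolding finite_simple_graph_def simple_graph_def by blast

lemma d_walk:
  assumes "v \<in> V" shows "\<exists>xs. is_walk V E xs v0 v \<and> length xs = Suc (d v)"
proof -
  obtain xs where w: "is_walk V E xs v0 v" using cn assms v0V unfolding connected_graph_def by blast
  then have "xs \<noteq> []" unfolding is_walk_def by simp
  then have "length xs = Suc (length xs - 1)" by simp
  with w have ex: "\<exists>n xs. is_walk V E xs v0 v \<and> length xs = Suc n" by blast
  show ?thesis using LeastI_ex[OF ex] unfolding gdist_def .
qed

lemma d_edge:
  assumes "E u v" shows "d v \<le> Suc (d u)"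
proof -
  obtain xs where w: "is_walk V E xs v0 u" and l: "length xs = Suc (d u)"
    using d_walk[of u] inV[OF assms] by auto
  have "is_walk V E [v] v v" using inV[OF assms] by (simp add: is_walk_single)
  from is_walk_append[OF w this assms] have "is_walk V E (xs @ [v]) v0 v" .
  moreover have "length (xs @ [v]) = Suc (Suc (d u))" using l by simp
  ultimately have "\<exists>ys. is_walk V E ys v0 v \<and> length ys = Suc (Suc (d u))" by (intro exI conjI)
  then show ?thesis unfolding gdist_def by (rule Least_le)
qed

lemma d_close: "x = y \<or> E x y \<Longrightarrow> d y \<le> Suc (d x) \<and> d x \<le> Suc (d y)"
  using d_edge sy by auto

definition cl :: "'a \<Rightarrow> 'a set" where
  "cl x = {u. conn (sphere V E v0 (d x)) E x u}"

lemma sphere_sub: "sphere V E v0 i \<subseteq> V"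
  unfolding sphere_def by auto

lemma in_sphere: "x \<in> V \<Longrightarrow> x \<in> sphere V E v0 (d x)"
  unfolding sphere_def by auto

lemma cl_self: "x \<in> V \<Longrightarrow> x \<in> cl x"
  unfolding cl_def using conn_refl[OF in_sphere] by blast

lemma conn_in: assumes "conn S E x u" shows "u \<in> S \<and> x \<in> S"
proof -
  obtain xs where w: "is_walk S E xs x u" using assms unfolding conn_def by blast
  then have "xs \<noteq> []" "set xs \<subseteq> S" "hd xs = x" "last xs = u" unfolding is_walk_def by auto
  then show ?thesis using hd_in_set last_in_set by blast
qed

lemma cl_sub: "u \<in> cl x \<Longrightarrow> u \<in> V \<and> d u = d x"
proof -
  assume "u \<in> cl x"
  then have "u \<in> sphere V E v0 (d x)" unfolding cl_def using conn_in by blast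
  then show ?thesis unfolding sphere_def by simp
qed

lemma cl_eq: assumes "u \<in> cl x" shows "cl u = cl x"
proof -
  have du: "d u = d x" using cl_sub[OF assms] by simp
  have c: "conn (sphere V E v0 (d x)) E x u" using assms unfolding cl_def by simp
  have c': "conn (sphere V E v0 (d x)) E u x" using conn_sym[OF sy c] .
  show ?thesis unfolding cl_def du
  proof (intro Collect_cong iffI)
    fix w assume "conn (sphere V E v0 (d x)) E u w"
    then show "conn (sphere V E v0 (d x)) E x w" using conn_trans[OF c] by blast
  next
    fix w assume "conn (sphere V E v0 (d x)) E x w"
    then show "conn (sphere V E v0 (d x)) E u w" using conn_trans[OF c'] by blast
  qed
qed

lemma cl_eqI: assumes "x \<in> V" "x = y \<or> E x y" "d x = d y" shows "cl x = cl y"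
proof (cases "x = y")
  case False
  then have e: "E x y" using assms by simp
  have "y \<in> V" using inV[OF e] by simp
  then have "y \<in> sphere V E v0 (d x)" using in_sphere assms(3) by simp
  then have "conn (sphere V E v0 (d x)) E x y"
    using conn_edge[OF in_sphere[OF assms(1)]] e by simp
  then have "y \<in> cl x" unfolding cl_def by simp
  from cl_eq[OF this] show ?thesis by simp
qed simp

lemma cl_d: assumes "y \<in> V" "cl x = cl y" shows "d x = d y"
proof -
  have "y \<in> cl x" using cl_self[OF assms(1)] assms(2) by simp
  from cl_sub[OF this] show ?thesis by simp
qed

lemma clusters_eq: "clusters V E v0 = cl ` V"
proof
  show "clusters V E v0 \<subseteq> cl ` V"
  proof
    fix C assume "C \<in> clusters V E v0"
    then obtain i v where v: "v \<in> sphere V E v0 i" and C: "C = {u. \<exists>xs. is_walk (sphere V E v0 i) E xs v u}"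
      unfolding clusters_def by blast
    have "d v = i" "v \<in> V" using v unfolding sphere_def by auto
    then have "C = cl v" unfolding C cl_def conn_def by simp
    then show "C \<in> cl ` V" using \<open>v \<in> V\<close> by blast
  qed
next
  show "cl ` V \<subseteq> clusters V E v0"
  proof
    fix C assume "C \<in> cl ` V"
    then obtain v where v: "v \<in> V" "C = cl v" by blast
    then show "C \<in> clusters V E v0" unfolding clusters_def cl_def conn_def
      using in_sphere[OF v(1)] by blast
  qed
qed

lemma adj_or_eq:
  assumes "x \<in> V" "y \<in> V" "x = y \<or> E x y"
  shows "cl x = cl y \<or> cluster_adj E (cl x) (cl y)"
proof (cases "cl x = cl y")
  case False
  then have "E x y" using assms by auto
  then show ?thesis using False cl_self assms unfolding cluster_adj_def by blast
qed simp

lemma tri: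
  assumes "x \<in> V" "y \<in> V" "z \<in> V" "x = y \<or> E x y" "y = z \<or> E y z" "x = z \<or> E x z"
  shows "cl x = cl y \<or> cl y = cl z \<or> cl x = cl z"
proof -
  have a: "d y \<le> Suc (d x) \<and> d x \<le> Suc (d y)" using d_close assms(4) .
  have b: "d z \<le> Suc (d y) \<and> d y \<le> Suc (d z)" using d_close assms(5) .
  have c: "d z \<le> Suc (d x) \<and> d x \<le> Suc (d z)" using d_close assms(6) .
  have "d x = d y \<or> d y = d z \<or> d x = d z" using a b c by linarith
  then show ?thesis
  proof (elim disjE)
    assume "d x = d y" then show ?thesis using cl_eqI[OF assms(1) assms(4)] by simp
  next
    assume "d y = d z" then show ?thesis using cl_eqI[OF assms(2) assms(5)] by simp
  next
    assume "d x = d z" then show ?thesis using cl_eqI[OF assms(1) assms(6)] by simp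
  qed
qed

lemma walk_proj:
  "is_walk V E w x y \<Longrightarrow> \<exists>cs. is_walk (cl ` V) (cluster_adj E) cs (cl x) (cl y)"
proof (induction w arbitrary: x)
  case Nil then show ?case unfolding is_walk_def by simp
next
  case (Cons a w)
  have ax: "a = x" and aV: "a \<in> V" using Cons.prems unfolding is_walk_def by auto
  show ?case
  proof (cases w)
    case Nil
    then have "y = x" using Cons.prems unfolding is_walk_def by auto
    moreover have "is_walk (cl ` V) (cluster_adj E) [cl x] (cl x) (cl x)"
      using aV ax by (simp add: is_walk_single)
    ultimately show ?thesis by blast
  next
    case (Cons b w')
    have e: "E a b" using Cons.prems \<open>w = b # w'\<close> unfolding is_walk_def by auto
    have ww: "is_walk V E w b y" using Cons.prems \<open>w = b # w'\<close> unfolding is_walk_def by auto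
    obtain cs where cs: "is_walk (cl ` V) (cluster_adj E) cs (cl b) (cl y)"
      using Cons.IH[OF ww] by blast
    have bV: "b \<in> V" using inV[OF e] by simp
    show ?thesis
    proof (cases "cl a = cl b")
      case True then show ?thesis using cs ax by auto
    next
      case False
      then have adj: "cluster_adj E (cl a) (cl b)" using adj_or_eq[OF aV bV] e by simp
      have "is_walk (cl ` V) (cluster_adj E) [cl a] (cl a) (cl a)"
        using aV by (simp add: is_walk_single)
      from is_walk_append[OF this cs adj] show ?thesis using ax by blast
    qed
  qed
qed

lemma in_cluster_walk:
  assumes C: "C \<in> cl ` V" and x: "x \<in> C" and y: "y \<in> C"
  shows "\<exists>w. is_walk V E w x y \<and> (\<forall>u\<in>set w. cl u = C)"
proof -
  obtain c where c: "c \<in> V" "C = cl c" using C by blast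
  have clx: "cl x = C" using cl_eq x c by simp
  have "y \<in> cl x" using y clx by simp
  then obtain w where w: "is_walk (sphere V E v0 (d x)) E w x y" unfolding cl_def conn_def by blast
  have "\<forall>u\<in>set w. cl u = C"
  proof
    fix u assume "u \<in> set w"
    from conn_mid[OF w this] have "u \<in> cl x" unfolding cl_def by simp
    from cl_eq[OF this] show "cl u = C" using clx by simp
  qed
  moreover have "is_walk V E w x y" using is_walk_mono[OF sphere_sub w] .
  ultimately show ?thesis by blast
qed

lemma lift:
  assumes Qirr: "\<And>X. \<not> Q X X"
  shows "cs \<noteq> [] \<Longrightarrow> set cs \<subseteq> cl ` V \<Longrightarrow> successively (cluster_adj E) cs \<Longrightarrow>
    x \<in> hd cs \<Longrightarrow> y \<in> last cs \<Longrightarrow>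
    \<exists>xs. is_walk V E xs x y \<and> ct (\<lambda>a b. Q (cl a) (cl b)) xs = ct Q cs"
proof (induction cs arbitrary: x)
  case Nil then show ?case by simp
next
  case (Cons C cs)
  have CV: "C \<in> cl ` V" using Cons.prems by simp
  show ?case
  proof (cases cs)
    case Nil
    have x: "x \<in> C" and y: "y \<in> C" using Cons.prems Nil by auto
    obtain w where w: "is_walk V E w x y" and wc: "\<forall>u\<in>set w. cl u = C"
      using in_cluster_walk[OF CV x y] by blast
    have "ct (\<lambda>a b. Q (cl a) (cl b)) w = 0"
      by (rule ct_zero) (use wc Qirr in simp)
    then show ?thesis using w Nil by auto
  next
    case (Cons D cs')
    have adj: "cluster_adj E C D" using Cons.prems \<open>cs = D # cs'\<close> by simp
    then obtain v v' where v: "v \<in> C" and v': "v' \<in> D" and e: "E v v'"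
      unfolding cluster_adj_def by blast
    have x: "x \<in> C" using Cons.prems by simp
    obtain w1 where w1: "is_walk V E w1 x v" and wc: "\<forall>u\<in>set w1. cl u = C"
      using in_cluster_walk[OF CV x v] by blast
    have ct1: "ct (\<lambda>a b. Q (cl a) (cl b)) w1 = 0"
      by (rule ct_zero) (use wc Qirr in simp)
    have "cs \<noteq> []" "set cs \<subseteq> cl ` V" "successively (cluster_adj E) cs" "v' \<in> hd cs" "y \<in> last cs"
      using Cons.prems \<open>cs = D # cs'\<close> v' by auto
    then obtain w2 where w2: "is_walk V E w2 v' y" and ct2: "ct (\<lambda>a b. Q (cl a) (cl b)) w2 = ct Q cs"
      using Cons.IH by blast
    have DV: "D \<in> cl ` V" using Cons.prems \<open>cs = D # cs'\<close> by simp
    then obtain c where c: "D = cl c" by blast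
    have clv': "cl v' = D" using cl_eq v' c by simp
    have clv: "cl v = C" using CV cl_eq v by auto
    have ne1: "w1 \<noteq> []" "last w1 = v" using w1 unfolding is_walk_def by auto
    have ne2: "w2 \<noteq> []" "hd w2 = v'" using w2 unfolding is_walk_def by auto
    have "ct (\<lambda>a b. Q (cl a) (cl b)) (w1 @ w2) = (if Q C D then 1 else 0) + ct Q cs"
      using ct_append[OF ne1(1) ne2(1), of "\<lambda>a b. Q (cl a) (cl b)"] ct1 ct2 ne1 ne2 clv clv' by simp
    also have "\<dots> = ct Q (C # cs)" using \<open>cs = D # cs'\<close> by simp
    finally show ?thesis using is_walk_append[OF w1 w2 e] by blast
  qed
qed

lemma parity:
  assumes "A \<noteq> B" "cl p = cl a \<or> cl a = cl b \<or> cl p = cl b"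
  shows "even ((if {cl p, cl a} = {A, B} then 1 else 0) + (if {cl a, cl b} = {A, B} then 1 else 0) + (k::nat))
     \<longleftrightarrow> even ((if {cl p, cl b} = {A, B} then 1 else 0) + k)"
proof -
  have irr: "\<And>X. {X, X} \<noteq> {A, B}" using assms(1) by (metis doubleton_eq_iff)
  have sym2: "\<And>X Y. {X, Y} = {Y, X}" by (rule insert_commute)
  show ?thesis using assms(2)
  proof (elim disjE)
    assume h: "cl p = cl a" show ?thesis using irr[of "cl a"] unfolding h by simp
  next
    assume h: "cl a = cl b" show ?thesis using irr[of "cl b"] unfolding h by simp
  next
    assume h: "cl p = cl b" show ?thesis using irr[of "cl b"] sym2[of "cl a" "cl b"] unfolding h by simp
  qed
qed

lemma red_even:
  assumes AB: "A \<noteq> B" and L: "is_loop V E xs" and R: "elem_reduction E xs ys"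
  shows "even (ct (\<lambda>a b. {cl a, cl b} = {A, B}) xs) \<longleftrightarrow> even (ct (\<lambda>a b. {cl a, cl b} = {A, B}) ys)"
proof -
  let ?P = "\<lambda>a b. {cl a, cl b} = {A, B}"
  obtain i where i: "Suc i < length xs" and ys: "ys = take i xs @ drop (Suc i) xs"
    and cond: "xs ! i = xs ! Suc i \<or>
      (0 < i \<and> (xs ! (i - 1) = xs ! Suc i \<or> E (xs ! (i - 1)) (xs ! Suc i)))"
    using R unfolding elem_reduction_def by blast
  define a where "a = xs ! i"
  define b where "b = xs ! Suc i"
  define post where "post = drop (Suc (Suc i)) xs"
  have d1: "drop (Suc i) xs = b # post" unfolding b_def post_def
    by (rule Cons_nth_drop_Suc[symmetric]) (use i in simp)
  have "drop i xs = a # drop (Suc i) xs" unfolding a_def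
    by (rule Cons_nth_drop_Suc[symmetric]) (use i in simp)
  then have d0: "drop i xs = a # b # post" using d1 by simp
  have xs: "xs = take i xs @ a # b # post" using d0 by (metis append_take_drop_id)
  have ys': "ys = take i xs @ b # post" using ys d1 by simp
  have Lsucc: "successively (\<lambda>a b. a = b \<or> E a b) xs" and LV: "set xs \<subseteq> V"
    using L unfolding is_loop_def by auto
  have irr: "\<And>X. {X, X} \<noteq> {A, B}" using AB by (metis doubleton_eq_iff)
  show ?thesis
  proof (cases "a = b")
    case True
    have "ct ?P xs = ct ?P (take i xs @ [a]) + ct ?P (a # b # post)"
      using ct_Cons_app[of ?P "take i xs" a "b # post"] xs by simp
    also have "\<dots> = ct ?P (take i xs @ [b]) + ct ?P (b # post)" using True irr by simp
    also have "\<dots> = ct ?P ys" using ct_Cons_app[of ?P "take i xs" b post] ys' by simp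
    finally show ?thesis by simp
  next
    case False
    then have i0: "0 < i" and pb: "xs ! (i - 1) = b \<or> E (xs ! (i - 1)) b"
      using cond unfolding a_def b_def by auto
    define p where "p = xs ! (i - 1)"
    define pre where "pre = take (i - 1) xs"
    have tk: "take i xs = pre @ [p]" unfolding pre_def p_def using i i0
      by (metis Suc_diff_1 Suc_lessD less_trans_Suc take_Suc_conv_app_nth lessI)
    have xs2: "xs = pre @ p # a # b # post" using xs tk by simp
    have ys2: "ys = pre @ p # b # post" using ys' tk by simp
    have s2: "successively (\<lambda>a b. a = b \<or> E a b) (p # a # b # post)"
      using Lsucc xs2 by (metis successively_append_iff)
    then have pa: "p = a \<or> E p a" and ab: "a = b \<or> E a b" by auto
    have V3: "p \<in> V" "a \<in> V" "b \<in> V" using LV xs2 by auto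
    have t: "cl p = cl a \<or> cl a = cl b \<or> cl p = cl b"
      using tri[OF V3 pa ab] pb unfolding p_def by simp
    have cx: "ct ?P xs = ct ?P (pre @ [p]) + ((if ?P p a then 1 else 0) + (if ?P a b then 1 else 0) + ct ?P (b # post))"
      using ct_Cons_app[of ?P pre p "a # b # post"] xs2 by simp
    have cy: "ct ?P ys = ct ?P (pre @ [p]) + ((if ?P p b then 1 else 0) + ct ?P (b # post))"
      using ct_Cons_app[of ?P pre p "b # post"] ys2 by simp
    have "even ((if ?P p a then 1 else 0) + (if ?P a b then 1 else 0) + ct ?P (b # post))
      \<longleftrightarrow> even ((if ?P p b then 1 else 0) + ct ?P (b # post))"
      using parity[OF AB t] by simp
    then show ?thesis unfolding cx cy by simp
  qed
qed

lemma hom_even: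
  assumes AB: "A \<noteq> B"
  shows "(elem_homotopy V E)\<^sup>*\<^sup>* xs ys \<Longrightarrow>
    even (ct (\<lambda>a b. {cl a, cl b} = {A, B}) xs) \<longleftrightarrow> even (ct (\<lambda>a b. {cl a, cl b} = {A, B}) ys)"
proof (induction rule: rtranclp_induct)
  case base then show ?case by simp
next
  case (step y z)
  have "is_loop V E y" "is_loop V E z" "elem_reduction E y z \<or> elem_reduction E z y"
    using step.hyps(2) unfolding elem_homotopy_def by auto
  then have "even (ct (\<lambda>a b. {cl a, cl b} = {A, B}) y) \<longleftrightarrow> even (ct (\<lambda>a b. {cl a, cl b} = {A, B}) z)"
    using red_even[OF AB] by blast
  then show ?case using step.IH by simp
qed

end

theorem mainTheorem3:
  fixes V :: "'a set" and E :: "'a \<Rightarrow> 'a \<Rightarrow> bool" and v0 :: 'a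
  assumes "finite_simple_graph V E"
    and "connected_graph V E"
    and "simply_connected V E"
    and "v0 \<in> V"
  shows "is_tree (clusters V E v0) (cluster_adj E)"
proof -
  interpret cg V E v0 using assms(1,2,4) by unfold_locales
  have CL: "clusters V E v0 = cl ` V" by (rule clusters_eq)
  have conn: "connected_graph (clusters V E v0) (cluster_adj E)"
    unfolding connected_graph_def CL
  proof (intro conjI ballI)
    show "cl ` V \<noteq> {}" using assms(4) by blast
  next
    fix C C' assume "C \<in> cl ` V" "C' \<in> cl ` V"
    then obtain x y where xy: "x \<in> V" "y \<in> V" "C = cl x" "C' = cl y" by blast
    obtain w where "is_walk V E w x y" using assms(2) xy unfolding connected_graph_def by blast
    from walk_proj[OF this] show "\<exists>xs. is_walk (cl ` V) (cluster_adj E) xs C C'" using xy by simp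
  qed
  have nocyc: "\<not> is_cycle (cl ` V) (cluster_adj E) cs" for cs
  proof
    assume cy: "is_cycle (cl ` V) (cluster_adj E) cs"
    then have len: "length cs \<ge> 3" and dist: "distinct cs" and sub: "set cs \<subseteq> cl ` V"
      and succ: "successively (cluster_adj E) cs" and cl: "cluster_adj E (last cs) (hd cs)"
      unfolding is_cycle_def by auto
    obtain A B r1 rest' where cs: "cs = A # B # r1 # rest'"
      using len by (cases cs; cases "tl cs"; cases "tl (tl cs)") auto
    define rest where "rest = r1 # rest'"
    have AB: "A \<noteq> B" using dist cs by auto
    let ?Q = "\<lambda>X Y. {X, Y} = {A, B}"
    have irr: "\<And>X. \<not> ?Q X X" using AB by (metis doubleton_eq_iff)
    define cs' where "cs' = cs @ [A]"
    have s': "successively (cluster_adj E) cs'"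
      unfolding cs'_def successively_append_iff using succ cl cs by simp
    have sub': "set cs' \<subseteq> cl ` V" unfolding cs'_def using sub cs by auto
    have AV: "A \<in> cl ` V" using sub cs by simp
    then obtain c where c: "c \<in> V" "A = cl c" by blast
    have cA: "c \<in> A" using c cl_self by simp
    have "cs' \<noteq> []" "c \<in> hd cs'" "c \<in> last cs'" unfolding cs'_def using cA cs by auto
    then obtain xs where w: "is_walk V E xs c c"
      and ctx: "ct (\<lambda>a b. ?Q (cl a) (cl b)) xs = ct ?Q cs'"
      using lift[of ?Q, OF irr] sub' s' by blast
    have loop: "is_loop V E xs"
    proof -
      have "successively E xs" using w unfolding is_walk_def by simp
      then have "successively (\<lambda>a b. a = b \<or> E a b) xs" by (rule successively_mono) simp
      then show ?thesis using w unfolding is_loop_def is_walk_def by simp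
    qed
    then obtain v where "(elem_homotopy V E)\<^sup>*\<^sup>* xs [v]"
      using assms(3) unfolding simply_connected_def contractible_def by blast
    from hom_even[OF AB this] have ev: "even (ct ?Q cs')" using ctx by simp
    have notin: "\<And>x y. x \<in> set rest \<Longrightarrow> \<not> ?Q x y"
    proof
      fix x y assume "x \<in> set rest" "?Q x y"
      then have "x \<in> {A, B}" by (metis insertI1)
      moreover have "A \<notin> set rest" "B \<notin> set rest" using dist cs unfolding rest_def by auto
      ultimately show False using \<open>x \<in> set rest\<close> by auto
    qed
    have r1n: "\<not> ?Q B r1"
    proof
      assume "?Q B r1"
      then have "r1 \<in> {A, B}" by (metis insertI1 insert_commute)
      moreover have "r1 \<noteq> A" "r1 \<noteq> B" using dist cs by auto
      ultimately show False by auto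
    qed
    have z: "ct ?Q (rest @ [A]) = 0" by (rule ct_zero2) (use notin in blast)
    have "cs' = A # B # (r1 # rest' @ [A])" unfolding cs'_def cs by simp
    then have "ct ?Q cs' = 1" using z r1n unfolding rest_def by simp
    then show False using ev by simp
  qed
  show ?thesis unfolding is_tree_def using conn nocyc CL by simp
qed

end
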